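(* Let $N\ge 2$, let $\mathbf{K}\in\mathbb{R}^{N\times N}$ be the cyclic shift matrix ($(\mathbf{K}\mathbf{x})_1=x_N$, $(\mathbf{K}\mathbf{x})_i=x_{i-1}$ for $i\ge2$), $\mathbf{K}(\omega)=(1-\omega)\mathbf{I}+\omega\mathbf{K}$, $\mathbf{D}=\mathbf{K}-\mathbf{I}$ and $\mathbf{L}=\mathbf{K}+\mathbf{K}^T-2\mathbf{I}$. Suppose $\mathbf{a},\mathbf{b}\in\mathbb{R}^N$ are non-constant vectors. If $\nu=\operatorname{argmin}_{\omega\in\mathbb{R}}\|\mathbf{b}-\mathbf{K}(\omega)^T\mathbf{a}\|_2^2$, then $$\nu=\frac12\left(1-2\,\frac{\mathbf{a}^T\mathbf{D}\mathbf{b}}{\mathbf{a}^T\mathbf{L}\mathbf{a}}\right).$$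
   Context: A vector is constant if all its entries are equal. $\|\cdot\|_2$ is the Euclidean norm. *)

theory Defs
  imports Complex_Main
begin

(* Vectors in R^N are functions nat => real, only indices 0..N-1 matter (0-based).
   N x N matrices are functions nat => nat => real, only indices < N matter. *)

definition mat_vec :: "nat \<Rightarrow> (nat \<Rightarrow> nat \<Rightarrow> real) \<Rightarrow> (nat \<Rightarrow> real) \<Rightarrow> nat \<Rightarrow> real" where
  "mat_vec N M x = (\<lambda>i. \<Sum>j<N. M i j * x j)"

definition dotN :: "nat \<Rightarrow> (nat \<Rightarrow> real) \<Rightarrow> (nat \<Rightarrow> real) \<Rightarrow> real" where
  "dotN N x y = (\<Sum>i<N. x i * y i)"

definition norm2sq :: "nat \<Rightarrow> (nat \<Rightarrow> real) \<Rightarrow> real" where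
  "norm2sq N x = dotN N x x"

definition idm :: "nat \<Rightarrow> nat \<Rightarrow> real" where
  "idm i j = (if i = j then 1 else 0)"

definition mtrans :: "(nat \<Rightarrow> nat \<Rightarrow> real) \<Rightarrow> nat \<Rightarrow> nat \<Rightarrow> real" where
  "mtrans M = (\<lambda>i j. M j i)"

(* cyclic shift: (K x)_0 = x_(N-1), (K x)_i = x_(i-1) for i >= 1 *)
definition shiftK :: "nat \<Rightarrow> nat \<Rightarrow> nat \<Rightarrow> real" where
  "shiftK N i j = (if j = (i + N - 1) mod N then 1 else 0)"

definition Komega :: "nat \<Rightarrow> real \<Rightarrow> nat \<Rightarrow> nat \<Rightarrow> real" where
  "Komega N \<omega> i j = (1 - \<omega>) * idm i j + \<omega> * shiftK N i j"

definition Dmat :: "nat \<Rightarrow> nat \<Rightarrow> nat \<Rightarrow> real" where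
  "Dmat N i j = shiftK N i j - idm i j"

definition Lmat :: "nat \<Rightarrow> nat \<Rightarrow> nat \<Rightarrow> real" where
  "Lmat N i j = shiftK N i j + mtrans (shiftK N) i j - 2 * idm i j"

definition const_vec :: "nat \<Rightarrow> (nat \<Rightarrow> real) \<Rightarrow> bool" where
  "const_vec N x \<longleftrightarrow> (\<forall>i<N. \<forall>j<N. x i = x j)"

end

theory Submission imports Defs begin

definition sg :: "nat \<Rightarrow> nat \<Rightarrow> nat" where "sg N i = (i+1) mod N"
definition tg :: "nat \<Rightarrow> nat \<Rightarrow> nat" where "tg N i = (i+N-1) mod N"

lemma st: "N \<ge> 2 \<Longrightarrow> i < N \<Longrightarrow> sg N (tg N i) = i"
  unfolding sg_def tg_def
  by (metis Nat.add_diff_assoc add_diff_cancel_left' le_add1 le_trans mod_add_left_eq mod_add_self2 mod_less one_le_numeral add.commute)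

lemma ts: "N \<ge> 2 \<Longrightarrow> i < N \<Longrightarrow> tg N (sg N i) = i"
  unfolding sg_def tg_def
proof -
  assume N: "N \<ge> 2" and i: "i < N"
  show "((i + 1) mod N + N - 1) mod N = i"
  proof (cases "i + 1 < N")
    case True
    then have "(i + 1) mod N + N - 1 = i + N" by simp
    then show ?thesis using i by simp
  next
    case False
    then have "i + 1 = N" using i by simp
    then show ?thesis using N by simp
  qed
qed

lemma sg_lt: "N \<ge> 2 \<Longrightarrow> sg N i < N" unfolding sg_def by simp
lemma tg_lt: "N \<ge> 2 \<Longrightarrow> tg N i < N" unfolding tg_def by simp

lemma bij_sg: "N \<ge> 2 \<Longrightarrow> bij_betw (sg N) {..<N} {..<N}"
  by (rule bij_betw_byWitness[where f'="tg N"]) (auto simp: st ts sg_lt tg_lt)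

lemma sum_sg: "N \<ge> 2 \<Longrightarrow> (\<Sum>i<N. g (sg N i)) = (\<Sum>i<N. (g i::real))"
  using sum.reindex_bij_betw[OF bij_sg, of N g] by simp

lemma sum_tg: "N \<ge> 2 \<Longrightarrow> (\<Sum>i<N. h (tg N i) i) = (\<Sum>i<N. (h i (sg N i)::real))"
proof -
  assume N: "N \<ge> 2"
  have "(\<Sum>i<N. h i (sg N i)) = (\<Sum>i<N. h (tg N (sg N i)) (sg N i))"
    by (rule sum.cong) (auto simp: ts N)
  also have "\<dots> = (\<Sum>i<N. h (tg N i) i)" using sum_sg[OF N, of "\<lambda>j. h (tg N j) j"] .
  finally show ?thesis by simp
qed

lemma mv_K: "N \<ge> 2 \<Longrightarrow> i < N \<Longrightarrow> mat_vec N (shiftK N) x i = x (tg N i)"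
  unfolding mat_vec_def shiftK_def tg_def
  by (simp add: if_distrib[where f="\<lambda>c. c * _"] sum.delta cong: if_cong)

lemma mv_KT: "N \<ge> 2 \<Longrightarrow> i < N \<Longrightarrow> mat_vec N (mtrans (shiftK N)) x i = x (sg N i)"
proof -
  assume N: "N \<ge> 2" and i: "i < N"
  have "\<And>j. j < N \<Longrightarrow> (i = (j + N - 1) mod N) = (j = sg N i)"
    using st ts N i sg_lt unfolding tg_def by metis
  then have "mat_vec N (mtrans (shiftK N)) x i = (\<Sum>j<N. if j = sg N i then x j else 0)"
    unfolding mat_vec_def mtrans_def shiftK_def by (intro sum.cong) auto
  also have "\<dots> = x (sg N i)" using sg_lt[OF N] by (simp add: sum.delta)
  finally show ?thesis .
qed

lemma mv_I: "i < N \<Longrightarrow> mat_vec N idm x i = x i"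
  unfolding mat_vec_def idm_def
  by (simp add: if_distrib[where f="\<lambda>c. c * _"] sum.delta cong: if_cong)


lemma mv_KTo: "N \<ge> 2 \<Longrightarrow> i < N \<Longrightarrow>
  mat_vec N (mtrans (Komega N w)) a i = (1 - w) * a i + w * a (sg N i)"
proof -
  assume N: "N \<ge> 2" and i: "i < N"
  have "mat_vec N (mtrans (Komega N w)) a i = (1-w) * mat_vec N idm a i + w * mat_vec N (mtrans (shiftK N)) a i"
    unfolding mat_vec_def mtrans_def Komega_def
    by (auto simp: sum_distrib_left sum.distrib[symmetric] algebra_simps idm_def intro!: sum.cong)
  then show ?thesis using mv_I[OF i] mv_KT[OF N i] by simp
qed

lemma nonconst_c:
  assumes N: "N \<ge> 2" and nc: "\<not> const_vec N a"
  shows "\<exists>i<N. a (sg N i) - a i \<noteq> 0"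
proof (rule ccontr)
  assume "\<not> ?thesis"
  then have h: "\<And>i. i < N \<Longrightarrow> a (Suc i mod N) = a i" unfolding sg_def by auto
  have "\<And>i. i < N \<Longrightarrow> a i = a 0"
  proof -
    fix i show "i < N \<Longrightarrow> a i = a 0"
    proof (induction i)
      case 0 then show ?case by simp
    next
      case (Suc i)
      then have "a (Suc i mod N) = a i" using h[of i] by simp
      then show ?case using Suc by simp
    qed
  qed
  then show False using nc unfolding const_vec_def by metis
qed

theorem lemma3p4:
  fixes N :: nat and a b :: "nat \<Rightarrow> real" and \<nu> :: real
  assumes "N \<ge> 2"
    and "\<not> const_vec N a" and "\<not> const_vec N b"
    and "is_arg_min (\<lambda>\<omega>. norm2sq N (\<lambda>i. b i - mat_vec N (mtrans (Komega N \<omega>)) a i))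
                    (\<lambda>_. True) \<nu>"
  shows "\<nu> = 1/2 * (1 - 2 * dotN N a (mat_vec N (Dmat N) b) / dotN N a (mat_vec N (Lmat N) a))"
proof -
  note N = assms(1)
  define c where "c i = a (sg N i) - a i" for i
  define d where "d i = b i - a i" for i
  define A where "A = (\<Sum>i<N. c i ^ 2)"
  define B where "B = (\<Sum>i<N. c i * d i)"
  define C where "C = (\<Sum>i<N. d i ^ 2)"
  let ?f = "\<lambda>\<omega>. norm2sq N (\<lambda>i. b i - mat_vec N (mtrans (Komega N \<omega>)) a i)"
  have f: "?f w = A * w^2 - 2 * B * w + C" for w
  proof -
    have "?f w = (\<Sum>i<N. (d i - w * c i)^2)"
      unfolding norm2sq_def dotN_def
      by (rule sum.cong) (auto simp: mv_KTo N c_def d_def power2_eq_square algebra_simps)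
    also have "\<dots> = A * w^2 - 2 * B * w + C"
      unfolding A_def B_def C_def
      by (simp add: power2_eq_square algebra_simps sum.distrib sum_distrib_left sum_subtractf)
    finally show ?thesis .
  qed
  have Apos: "A > 0"
  proof -
    obtain i where i: "i < N" "c i \<noteq> 0" using nonconst_c[OF N assms(2)] c_def by auto
    have "c i ^ 2 \<le> A" unfolding A_def
      by (rule member_le_sum) (use i in auto)
    moreover have "c i ^ 2 > 0" using i by simp
    ultimately show ?thesis by linarith
  qed
  have "?f \<nu> \<le> ?f (B / A)" using assms(4) unfolding is_arg_min_def by (metis not_less)
  then have "A * \<nu>^2 - 2 * B * \<nu> + C \<le> A * (B/A)^2 - 2 * B * (B/A) + C" by (simp only: f)
  moreover have "A * (\<nu> - B/A)^2 = (A * \<nu>^2 - 2 * B * \<nu> + C) - (A * (B/A)^2 - 2 * B * (B/A) + C)"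
    using Apos by (simp add: power2_eq_square field_simps)
  ultimately have "A * (\<nu> - B/A)^2 \<le> 0" by linarith
  then have nu: "\<nu> = B / A" using Apos
    by (smt (verit) mult_pos_pos zero_less_power2 right_minus_eq)
  define S where "S = (\<Sum>i<N. a i * a (sg N i))"
  define Q where "Q = (\<Sum>i<N. a i * a i)"
  define T where "T = (\<Sum>i<N. a (sg N i) * b i)"
  define P where "P = (\<Sum>i<N. a i * b i)"
  have Q2: "(\<Sum>i<N. a (sg N i) * a (sg N i)) = Q" unfolding Q_def using sum_sg[OF N, of "\<lambda>j. a j * a j"] .
  have AA: "A = 2*Q - 2*S"
  proof -
    have "A = (\<Sum>i<N. a (sg N i) * a (sg N i)) - 2 * S + Q"
      unfolding A_def c_def S_def Q_def
      by (simp add: power2_eq_square algebra_simps sum.distrib sum_distrib_left sum_subtractf)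
    then show ?thesis using Q2 by simp
  qed
  have BB: "B = T - S - P + Q"
    unfolding B_def c_def d_def S_def Q_def T_def P_def
    by (simp add: algebra_simps sum.distrib sum_distrib_left sum_subtractf)
  have Db: "dotN N a (mat_vec N (Dmat N) b) = T - P"
  proof -
    have "dotN N a (mat_vec N (Dmat N) b) = (\<Sum>i<N. a i * b (tg N i)) - P"
    proof -
      have "dotN N a (mat_vec N (Dmat N) b) = (\<Sum>i<N. a i * (mat_vec N (shiftK N) b i - mat_vec N idm b i))"
        unfolding dotN_def mat_vec_def Dmat_def
        by (simp add: algebra_simps sum_subtractf)
      also have "\<dots> = (\<Sum>i<N. a i * b (tg N i) - a i * b i)"
        by (rule sum.cong) (auto simp: mv_K[OF N] mv_I algebra_simps)
      finally show ?thesis unfolding P_def by (simp add: sum_subtractf)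
    qed
    moreover have "(\<Sum>i<N. a i * b (tg N i)) = T"
      unfolding T_def using sum_tg[OF N, of "\<lambda>x y. a y * b x"] by simp
    ultimately show ?thesis by simp
  qed
  have La: "dotN N a (mat_vec N (Lmat N) a) = 2*S - 2*Q"
  proof -
    have "dotN N a (mat_vec N (Lmat N) a) = (\<Sum>i<N. a i * (mat_vec N (shiftK N) a i + mat_vec N (mtrans (shiftK N)) a i - 2 * mat_vec N idm a i))"
      unfolding dotN_def mat_vec_def Lmat_def
      by (simp add: algebra_simps sum_subtractf sum.distrib sum_distrib_left)
    also have "\<dots> = (\<Sum>i<N. a i * a (tg N i) + a i * a (sg N i) - 2 * (a i * a i))"
      by (rule sum.cong) (auto simp: mv_K[OF N] mv_KT[OF N] mv_I algebra_simps)
    also have "\<dots> = (\<Sum>i<N. a i * a (tg N i)) + S - 2 * Q"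
      unfolding S_def Q_def by (simp add: sum_subtractf sum.distrib sum_distrib_left)
    also have "(\<Sum>i<N. a i * a (tg N i)) = S"
      unfolding S_def using sum_tg[OF N, of "\<lambda>x y. a y * a x"] by (simp add: mult.commute)
    finally show ?thesis by simp
  qed
  show ?thesis unfolding Db La nu using Apos unfolding AA BB
    by (simp add: field_simps)
qed

end
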